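(* Let $V$ be a finite set of truth values and $\models_{\mathcal{D},\mathcal{D}}$ a pure consequence truth-relation on $V$ (constant expressive semantics). Then it admits exactly the same regular connectives as classical logic: a regularity rule is satisfied by some connective for $\models_{\mathcal{D},\mathcal{D}}$ iff it is satisfied by some classical connective.
   Context: $V$ contains distinct $1,0$; $\mathcal{D}\subseteq V$ with $1\in\mathcal{D}$, $0\notin\mathcal{D}$; $\gamma\models_{\mathcal{D},\mathcal{D}}\delta$ iff ($\gamma\subseteq\mathcal{D}\Rightarrow\delta\cap\mathcal{D}\neq\emptyset$). Semantics: valuations mapping atoms to $V$, connectives interpreted by fixed truth functions, extended compositionally, every assignment to finitely many distinct atoms realized; constant expressive: every value is the constant value of some formula. $\Gamma\vdash\Delta$ iff $v(\Gamma)\models v(\Delta)$ for all $v$. An $n$-ary connective $C$ is regular with rule $(\mathcal{B}^p,\mathcal{B}^c)$, $\mathcal{B}^p,\mathcal{B}^c\subseteq\mathcal{P}(\{1..n\})^2$, if for all $\Gamma,\Delta,F_1..F_n$: $\Gamma\cup\{C(\vec F)\}\vdash\Delta$ iff for all $(B_p,B_c)\in\mathcal{B}^p$, $\Gamma\cup\{F_i:i\in B_p\}\vdash\{F_i:i\in B_c\}\cup\Delta$; $\Gamma\vdash\{C(\vec F)\}\cup\Delta$ iff the same for all $(B_p,B_c)\in\mathcal{B}^c$. Classical logic: $V=\{0,1\}$ with relation $\models_{\{1\},\{1\}}$; classical connectives are truth functions $\{0,1\}^n\to\{0,1\}$. *)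

theory Defs
  imports Main
begin

datatype form = Atom nat | App nat "form list"

fun wf_form :: "(nat \<Rightarrow> nat) \<Rightarrow> form \<Rightarrow> bool" where
  "wf_form ar (Atom p) = True"
| "wf_form ar (App c Fs) = (length Fs = ar c \<and> list_all (wf_form ar) Fs)"

fun eval :: "(nat \<Rightarrow> 'v list \<Rightarrow> 'v) \<Rightarrow> (nat \<Rightarrow> 'v) \<Rightarrow> form \<Rightarrow> 'v" where
  "eval I v (Atom p) = v p"
| "eval I v (App c Fs) = I c (map (eval I v) Fs)"

text \<open>Valuations: all maps from atoms to V (so every assignment to finitely many
  distinct atoms is realized).\<close>
definition valuation :: "'v set \<Rightarrow> (nat \<Rightarrow> 'v) \<Rightarrow> bool" where
  "valuation V v \<longleftrightarrow> (\<forall>p. v p \<in> V)"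

definition pure_models :: "'v set \<Rightarrow> 'v set \<Rightarrow> 'v set \<Rightarrow> bool" where
  "pure_models D \<gamma> \<delta> \<longleftrightarrow> (\<gamma> \<subseteq> D \<longrightarrow> \<delta> \<inter> D \<noteq> {})"

definition sem_ok :: "'v set \<Rightarrow> (nat \<Rightarrow> nat) \<Rightarrow> (nat \<Rightarrow> 'v list \<Rightarrow> 'v) \<Rightarrow> bool" where
  "sem_ok V ar I \<longleftrightarrow> (\<forall>c xs. length xs = ar c \<and> set xs \<subseteq> V \<longrightarrow> I c xs \<in> V)"

definition const_expressive :: "'v set \<Rightarrow> (nat \<Rightarrow> nat) \<Rightarrow> (nat \<Rightarrow> 'v list \<Rightarrow> 'v) \<Rightarrow> bool" where
  "const_expressive V ar I \<longleftrightarrow>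
     (\<forall>x\<in>V. \<exists>F. wf_form ar F \<and> (\<forall>v. valuation V v \<longrightarrow> eval I v F = x))"

definition cons :: "'v set \<Rightarrow> 'v set \<Rightarrow> (nat \<Rightarrow> 'v list \<Rightarrow> 'v) \<Rightarrow> form set \<Rightarrow> form set \<Rightarrow> bool" where
  "cons V D I \<Gamma> \<Delta> \<longleftrightarrow>
     (\<forall>v. valuation V v \<longrightarrow> pure_models D (eval I v ` \<Gamma>) (eval I v ` \<Delta>))"

text \<open>The n-ary connective c is regular with rule (Bp, Bc); indices of arguments are 1..n.\<close>
definition regular ::
  "'v set \<Rightarrow> 'v set \<Rightarrow> (nat \<Rightarrow> nat) \<Rightarrow> (nat \<Rightarrow> 'v list \<Rightarrow> 'v) \<Rightarrow> nat \<Rightarrow> nat \<Rightarrow>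
   (nat set \<times> nat set) set \<Rightarrow> (nat set \<times> nat set) set \<Rightarrow> bool" where
  "regular V D ar I c n Bp Bc \<longleftrightarrow> ar c = n \<and>
     (\<forall>\<Gamma> \<Delta> F. (\<forall>G\<in>\<Gamma>. wf_form ar G) \<and> (\<forall>G\<in>\<Delta>. wf_form ar G) \<and> (\<forall>i\<in>{1..n}. wf_form ar (F i)) \<longrightarrow>
        (cons V D I (\<Gamma> \<union> {App c (map F [1..<n+1])}) \<Delta> \<longleftrightarrow>
           (\<forall>(P, Q)\<in>Bp. cons V D I (\<Gamma> \<union> F ` P) (F ` Q \<union> \<Delta>)))
      \<and> (cons V D I \<Gamma> ({App c (map F [1..<n+1])} \<union> \<Delta>) \<longleftrightarrow>
           (\<forall>(P, Q)\<in>Bc. cons V D I (\<Gamma> \<union> F ` P) (F ` Q \<union> \<Delta>))))"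

definition rule_admitted ::
  "'v set \<Rightarrow> 'v set \<Rightarrow> nat \<Rightarrow> (nat set \<times> nat set) set \<Rightarrow> (nat set \<times> nat set) set \<Rightarrow> bool" where
  "rule_admitted V D n Bp Bc \<longleftrightarrow>
     (\<exists>ar I c. sem_ok V ar I \<and> const_expressive V ar I \<and> regular V D ar I c n Bp Bc)"

end

theory Submission
  imports Defs
begin

definition sat :: "(nat \<Rightarrow> bool) \<Rightarrow> nat set \<Rightarrow> nat set \<Rightarrow> bool" where
  "sat b P Q \<longleftrightarrow> (\<forall>i\<in>P. b i) \<and> (\<forall>i\<in>Q. \<not> b i)"

lemma cons_iff: "cons V D I \<Gamma> \<Delta> \<longleftrightarrow> (\<forall>v. valuation V v \<longrightarrow> (\<forall>G\<in>\<Gamma>. eval I v G \<in> D) \<longrightarrow> (\<exists>G\<in>\<Delta>. eval I v G \<in> D))"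
  unfolding cons_def pure_models_def by (simp add: image_subset_iff disjoint_iff)

lemma consD: "cons V D I \<Gamma> \<Delta> \<Longrightarrow> valuation V v \<Longrightarrow> \<forall>G\<in>\<Gamma>. eval I v G \<in> D \<Longrightarrow> \<exists>G\<in>\<Delta>. eval I v G \<in> D"
  unfolding cons_iff by blast

lemma consI: "(\<And>v. valuation V v \<Longrightarrow> \<forall>G\<in>\<Gamma>. eval I v G \<in> D \<Longrightarrow> \<exists>G\<in>\<Delta>. eval I v G \<in> D) \<Longrightarrow> cons V D I \<Gamma> \<Delta>"
  unfolding cons_iff by blast

lemma bexpair: "(\<exists>(P,Q)\<in>B. S P Q) \<longleftrightarrow> (\<exists>P Q. (P,Q) \<in> B \<and> S P Q)" by auto
lemma ballpair: "(\<forall>(P,Q)\<in>B. S P Q) \<longleftrightarrow> (\<forall>P Q. (P,Q) \<in> B \<longrightarrow> S P Q)" by auto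

lemma ctx_step:
  assumes G: "\<forall>G\<in>\<Gamma>. eval I v G \<in> D" and s: "sat (\<lambda>i. eval I v (F i) \<in> D) P Q"
  shows "\<forall>G\<in>\<Gamma> \<union> F`P. eval I v G \<in> D"
  using G s unfolding sat_def by auto

lemma ctx_out:
  assumes "\<exists>G\<in>F`Q \<union> \<Delta>. eval I v G \<in> D" and s: "sat (\<lambda>i. eval I v (F i) \<in> D) P Q"
  shows "\<exists>G\<in>\<Delta>. eval I v G \<in> D"
  using assms unfolding sat_def by auto

lemma prem_equiv:
  assumes A: "\<And>v. valuation V v \<Longrightarrow> (eval I v t \<in> D \<longleftrightarrow> (\<exists>P Q. (P,Q)\<in>Bp \<and> sat (\<lambda>i. eval I v (F i) \<in> D) P Q))"
  shows "cons V D I (\<Gamma> \<union> {t}) \<Delta> \<longleftrightarrow> (\<forall>P Q. (P,Q)\<in>Bp \<longrightarrow> cons V D I (\<Gamma> \<union> F`P) (F`Q \<union> \<Delta>))"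
proof
  assume L: "cons V D I (\<Gamma> \<union> {t}) \<Delta>"
  show "\<forall>P Q. (P,Q)\<in>Bp \<longrightarrow> cons V D I (\<Gamma> \<union> F`P) (F`Q \<union> \<Delta>)"
  proof (intro allI impI)
    fix P Q assume PQ: "(P,Q) \<in> Bp"
    show "cons V D I (\<Gamma> \<union> F`P) (F`Q \<union> \<Delta>)"
    proof (rule consI)
      fix v assume v: "valuation V v" and G: "\<forall>G\<in>\<Gamma> \<union> F`P. eval I v G \<in> D"
      show "\<exists>G\<in>F`Q \<union> \<Delta>. eval I v G \<in> D"
      proof (cases "\<exists>i\<in>Q. eval I v (F i) \<in> D")
        case True then show ?thesis by blast
      next
        case False
        have "\<forall>i\<in>P. eval I v (F i) \<in> D" using G by simp
        then have s: "sat (\<lambda>i. eval I v (F i) \<in> D) P Q" using False unfolding sat_def by simp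
        have "eval I v t \<in> D" using A[OF v] PQ s by auto
        then have "\<forall>G\<in>\<Gamma> \<union> {t}. eval I v G \<in> D" using G by simp
        then have "\<exists>G\<in>\<Delta>. eval I v G \<in> D" using consD[OF L v] by simp
        then show ?thesis by blast
      qed
    qed
  qed
next
  assume R: "\<forall>P Q. (P,Q)\<in>Bp \<longrightarrow> cons V D I (\<Gamma> \<union> F`P) (F`Q \<union> \<Delta>)"
  show "cons V D I (\<Gamma> \<union> {t}) \<Delta>"
  proof (rule consI)
    fix v assume v: "valuation V v" and G: "\<forall>G\<in>\<Gamma> \<union> {t}. eval I v G \<in> D"
    then have "eval I v t \<in> D" by simp
    then obtain P Q where PQ: "(P,Q)\<in>Bp" and s: "sat (\<lambda>i. eval I v (F i) \<in> D) P Q"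
      using A[OF v] by auto
    have C: "cons V D I (\<Gamma> \<union> F`P) (F`Q \<union> \<Delta>)" using R PQ by simp
    have G': "\<forall>G\<in>\<Gamma>. eval I v G \<in> D" using G by simp
    show "\<exists>G\<in>\<Delta>. eval I v G \<in> D" 
      using ctx_out[OF consD[OF C v ctx_step[OF G' s]] s] .
  qed
qed

lemma conc_equiv:
  assumes A: "\<And>v. valuation V v \<Longrightarrow> (eval I v t \<in> D \<longleftrightarrow> (\<forall>P Q. (P,Q)\<in>Bc \<longrightarrow> \<not> sat (\<lambda>i. eval I v (F i) \<in> D) P Q))"
  shows "cons V D I \<Gamma> ({t} \<union> \<Delta>) \<longleftrightarrow> (\<forall>P Q. (P,Q)\<in>Bc \<longrightarrow> cons V D I (\<Gamma> \<union> F`P) (F`Q \<union> \<Delta>))"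
proof
  assume L: "cons V D I \<Gamma> ({t} \<union> \<Delta>)"
  show "\<forall>P Q. (P,Q)\<in>Bc \<longrightarrow> cons V D I (\<Gamma> \<union> F`P) (F`Q \<union> \<Delta>)"
  proof (intro allI impI)
    fix P Q assume PQ: "(P,Q) \<in> Bc"
    show "cons V D I (\<Gamma> \<union> F`P) (F`Q \<union> \<Delta>)"
    proof (rule consI)
      fix v assume v: "valuation V v" and G: "\<forall>G\<in>\<Gamma> \<union> F`P. eval I v G \<in> D"
      show "\<exists>G\<in>F`Q \<union> \<Delta>. eval I v G \<in> D"
      proof (cases "\<exists>i\<in>Q. eval I v (F i) \<in> D")
        case True then show ?thesis by blast
      next
        case False
        have "\<forall>i\<in>P. eval I v (F i) \<in> D" using G by simp
        then have s: "sat (\<lambda>i. eval I v (F i) \<in> D) P Q" using False unfolding sat_def by simp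
        have "\<forall>G\<in>\<Gamma>. eval I v G \<in> D" using G by simp
        then have "\<exists>G\<in>{t} \<union> \<Delta>. eval I v G \<in> D" using consD[OF L v] by simp
        moreover have "eval I v t \<notin> D" using A[OF v] PQ s by auto
        ultimately have "\<exists>G\<in>\<Delta>. eval I v G \<in> D" by simp
        then show ?thesis by blast
      qed
    qed
  qed
next
  assume R: "\<forall>P Q. (P,Q)\<in>Bc \<longrightarrow> cons V D I (\<Gamma> \<union> F`P) (F`Q \<union> \<Delta>)"
  show "cons V D I \<Gamma> ({t} \<union> \<Delta>)"
  proof (rule consI)
    fix v assume v: "valuation V v" and G: "\<forall>G\<in>\<Gamma>. eval I v G \<in> D"
    show "\<exists>G\<in>{t} \<union> \<Delta>. eval I v G \<in> D"
    proof (cases "eval I v t \<in> D")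
      case True then show ?thesis by simp
    next
      case False
      then obtain P Q where PQ: "(P,Q)\<in>Bc" and s: "sat (\<lambda>i. eval I v (F i) \<in> D) P Q"
        using A[OF v] by auto
      have C: "cons V D I (\<Gamma> \<union> F`P) (F`Q \<union> \<Delta>)" using R PQ by simp
      have "\<exists>G\<in>\<Delta>. eval I v G \<in> D"
        using ctx_out[OF consD[OF C v ctx_step[OF G s]] s] .
      then show ?thesis by simp
    qed
  qed
qed

definition rcond :: "(nat set \<times> nat set) set \<Rightarrow> (nat set \<times> nat set) set \<Rightarrow> bool" where
  "rcond Bp Bc \<longleftrightarrow> (\<forall>b. (\<exists>P Q. (P,Q)\<in>Bp \<and> sat b P Q) \<longleftrightarrow> (\<forall>P Q. (P,Q)\<in>Bc \<longrightarrow> \<not> sat b P Q))"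

lemma nec:
  assumes one: "one \<in> D" and D: "D \<subseteq> V" and zero: "zero \<in> V" "zero \<notin> D"
    and adm: "rule_admitted V D n Bp Bc"
  shows "rcond Bp Bc"
proof -
  obtain ar I c where ce: "const_expressive V ar I" and reg: "regular V D ar I c n Bp Bc"
    using adm unfolding rule_admitted_def by blast
  have oneV: "one \<in> V" using one D by blast
  obtain K1 where K1: "wf_form ar K1" "\<And>v. valuation V v \<Longrightarrow> eval I v K1 = one"
    using ce oneV unfolding const_expressive_def by blast
  obtain K0 where K0: "wf_form ar K0" "\<And>v. valuation V v \<Longrightarrow> eval I v K0 = zero"
    using ce zero unfolding const_expressive_def by blast
  have v0: "valuation V (\<lambda>_. one)" using oneV unfolding valuation_def by simp
  show ?thesis unfolding rcond_def
  proof
    fix b :: "nat \<Rightarrow> bool"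
    define F where "F i = (if b i then K1 else K0)" for i
    have wfF: "\<forall>i\<in>{1..n}. wf_form ar (F i)" using K1 K0 unfolding F_def by simp
    have evF: "eval I v (F i) = (if b i then one else zero)" if "valuation V v" for v i
      using K1 K0 that unfolding F_def by simp
    have hF: "(eval I v (F i) \<in> D) = b i" if "valuation V v" for v i
      using evF[OF that] one zero by simp
    define t where "t = App c (map F [1..<n+1])"
    define val where "val = I c (map (\<lambda>i. if b i then one else zero) [1..<n+1])"
    have evt: "eval I v t = val" if "valuation V v" for v
      unfolding t_def val_def using evF[OF that] by (simp del: upt_Suc cong: map_cong)
    have c1: "cons V D I ({} \<union> {t}) {} \<longleftrightarrow> val \<notin> D"
      unfolding cons_iff using evt v0 by auto
    have c3: "cons V D I {} ({t} \<union> {}) \<longleftrightarrow> val \<in> D"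
      unfolding cons_iff using evt v0 by auto
    have c2: "cons V D I ({} \<union> F`P) (F`Q \<union> {}) \<longleftrightarrow> \<not> sat b P Q" for P Q
      unfolding cons_iff sat_def using hF v0 by auto
    have reg': "\<forall>\<Gamma> \<Delta> F. (\<forall>G\<in>\<Gamma>. wf_form ar G) \<and> (\<forall>G\<in>\<Delta>. wf_form ar G) \<and> (\<forall>i\<in>{1..n}. wf_form ar (F i)) \<longrightarrow>
        (cons V D I (\<Gamma> \<union> {App c (map F [1..<n+1])}) \<Delta> \<longleftrightarrow>
           (\<forall>(P, Q)\<in>Bp. cons V D I (\<Gamma> \<union> F ` P) (F ` Q \<union> \<Delta>)))
      \<and> (cons V D I \<Gamma> ({App c (map F [1..<n+1])} \<union> \<Delta>) \<longleftrightarrow>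
           (\<forall>(P, Q)\<in>Bc. cons V D I (\<Gamma> \<union> F ` P) (F ` Q \<union> \<Delta>)))"
      using reg unfolding regular_def by (rule conjunct2)
    have rr: "(cons V D I ({} \<union> {t}) {} \<longleftrightarrow> (\<forall>(P, Q)\<in>Bp. cons V D I ({} \<union> F ` P) (F ` Q \<union> {})))
      \<and> (cons V D I {} ({t} \<union> {}) \<longleftrightarrow> (\<forall>(P, Q)\<in>Bc. cons V D I ({} \<union> F ` P) (F ` Q \<union> {})))"
      unfolding t_def using spec[OF spec[OF spec[OF reg', of "{}"], of "{}"], of F] wfF by simp
    have e1: "(\<forall>(P, Q)\<in>Bp. cons V D I ({} \<union> F ` P) (F ` Q \<union> {})) \<longleftrightarrow> (\<forall>P Q. (P,Q)\<in>Bp \<longrightarrow> \<not> sat b P Q)"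
      by (simp only: ballpair c2)
    have e2: "(\<forall>(P, Q)\<in>Bc. cons V D I ({} \<union> F ` P) (F ` Q \<union> {})) \<longleftrightarrow> (\<forall>P Q. (P,Q)\<in>Bc \<longrightarrow> \<not> sat b P Q)"
      by (simp only: ballpair c2)
    have r1: "val \<notin> D \<longleftrightarrow> (\<forall>P Q. (P,Q)\<in>Bp \<longrightarrow> \<not> sat b P Q)"
      using conjunct1[OF rr] c1 e1 by blast
    have r2: "val \<in> D \<longleftrightarrow> (\<forall>P Q. (P,Q)\<in>Bc \<longrightarrow> \<not> sat b P Q)"
      using conjunct2[OF rr] c3 e2 by blast
    show "(\<exists>P Q. (P,Q)\<in>Bp \<and> sat b P Q) \<longleftrightarrow> (\<forall>P Q. (P,Q)\<in>Bc \<longrightarrow> \<not> sat b P Q)"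
      using r1 r2 by blast
  qed
qed

lemma suf:
  assumes fin: "finite V" and one: "one \<in> D" and D: "D \<subseteq> V" and zero: "zero \<in> V" "zero \<notin> D"
    and sub: "\<forall>(P, Q)\<in>Bp \<union> Bc. P \<subseteq> {1..n} \<and> Q \<subseteq> {1..n}"
    and rc: "rcond Bp Bc"
  shows "rule_admitted V D n Bp Bc"
proof -
  obtain vs where vs: "set vs = V" using finite_list[OF fin] by blast
  have oneV: "one \<in> V" using one D by blast
  define ar :: "nat \<Rightarrow> nat" where "ar k = (if k = 0 then n else 0)" for k
  define I where "I k xs = (if k = 0 then (if (\<exists>P Q. (P,Q)\<in>Bp \<and> sat (\<lambda>i. xs ! (i - 1) \<in> D) P Q) then one else zero)
      else (if k - 1 < length vs then vs ! (k - 1) else one))" for k xs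
  have ok: "sem_ok V ar I" unfolding sem_ok_def I_def using oneV zero vs by auto
  have ce: "const_expressive V ar I" unfolding const_expressive_def
  proof
    fix x assume "x \<in> V"
    then obtain k where k: "k < length vs" "vs ! k = x" using vs by (metis in_set_conv_nth)
    show "\<exists>F. wf_form ar F \<and> (\<forall>v. valuation V v \<longrightarrow> eval I v F = x)"
      by (rule exI[of _ "App (Suc k) []"]) (simp add: ar_def I_def k)
  qed
  have reg: "regular V D ar I 0 n Bp Bc" unfolding regular_def
  proof (intro conjI allI impI)
    show "ar 0 = n" by (simp add: ar_def)
    fix \<Gamma> \<Delta> and F :: "nat \<Rightarrow> form"
    define t where "t = App 0 (map F [1..<n+1])"
    have key1: "eval I v t \<in> D \<longleftrightarrow> (\<exists>P Q. (P,Q)\<in>Bp \<and> sat (\<lambda>i. eval I v (F i) \<in> D) P Q)" for v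
    proof -
      have nth: "map (eval I v) (map F [1..<n+1]) ! (i - 1) = eval I v (F i)" if "i \<in> {1..n}" for i
        using that by (auto simp del: upt_Suc)
      have "sat (\<lambda>i. map (eval I v) (map F [1..<n+1]) ! (i - 1) \<in> D) P Q = sat (\<lambda>i. eval I v (F i) \<in> D) P Q"
        if "(P,Q) \<in> Bp" for P Q
      proof -
        have "P \<subseteq> {1..n} \<and> Q \<subseteq> {1..n}" using bspec[OF sub, of "(P,Q)"] that by simp
        then show ?thesis using nth unfolding sat_def by (metis (no_types, lifting) subsetD)
      qed
      then have "(\<exists>P Q. (P,Q)\<in>Bp \<and> sat (\<lambda>i. map (eval I v) (map F [1..<n+1]) ! (i - 1) \<in> D) P Q)
         \<longleftrightarrow> (\<exists>P Q. (P,Q)\<in>Bp \<and> sat (\<lambda>i. eval I v (F i) \<in> D) P Q)" by metis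
      then show ?thesis unfolding t_def using one zero by (simp add: I_def del: upt_Suc)
    qed
    have key2: "eval I v t \<in> D \<longleftrightarrow> (\<forall>P Q. (P,Q)\<in>Bc \<longrightarrow> \<not> sat (\<lambda>i. eval I v (F i) \<in> D) P Q)" for v
      using key1[of v] rc unfolding rcond_def by metis
    show "cons V D I (\<Gamma> \<union> {App 0 (map F [1..<n + 1])}) \<Delta> =
        (\<forall>(P, Q)\<in>Bp. cons V D I (\<Gamma> \<union> F ` P) (F ` Q \<union> \<Delta>))"
      using prem_equiv[of V I t D Bp F \<Gamma> \<Delta>] key1 unfolding t_def ballpair by simp
    show "cons V D I \<Gamma> ({App 0 (map F [1..<n + 1])} \<union> \<Delta>) =
        (\<forall>(P, Q)\<in>Bc. cons V D I (\<Gamma> \<union> F ` P) (F ` Q \<union> \<Delta>))"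
      using conc_equiv[of V I t D Bc F \<Gamma> \<Delta>] key2 unfolding t_def ballpair by simp
  qed
  show ?thesis unfolding rule_admitted_def using ok ce reg by blast
qed

theorem theorem6p2:
  fixes V D :: "'v set" and one zero :: 'v and n :: nat
    and Bp Bc :: "(nat set \<times> nat set) set"
  assumes "finite V"
    and "one \<in> V" and "zero \<in> V" and "one \<noteq> zero"
    and "D \<subseteq> V" and "one \<in> D" and "zero \<notin> D"
    and "\<forall>(P, Q)\<in>Bp \<union> Bc. P \<subseteq> {1..n} \<and> Q \<subseteq> {1..n}"
  shows "rule_admitted V D n Bp Bc \<longleftrightarrow> rule_admitted (UNIV :: bool set) {True} n Bp Bc"
proof
  assume "rule_admitted V D n Bp Bc"
  then have "rcond Bp Bc" using nec[of one D V zero n Bp Bc] assms by simp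
  then show "rule_admitted (UNIV :: bool set) {True} n Bp Bc"
    using suf[where V="UNIV :: bool set" and one=True and D="{True}" and zero=False] assms(8) by simp
next
  assume "rule_admitted (UNIV :: bool set) {True} n Bp Bc"
  then have "rcond Bp Bc" using nec[where one=True and D="{True}" and V=UNIV and zero=False] by simp
  then show "rule_admitted V D n Bp Bc" using suf[of V one D zero Bp Bc n] assms by simp
qed

end
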